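(* Let $\mathbb{L}$ be a complete, algebraically closed non-Archimedean field of characteristic $0$ and let $\phi$ be a rational map over $\mathbb{L}$ of degree $\geq 2$ having good reduction. Let $\vec v$ be a direction at the Gauss point $\zeta_{Gauss}$ which, viewed as a point of $\mathbb{P}^1(\tilde{\mathbb{L}})$, is a fixed critical point of the reduction $\tilde\phi$. Let $\xi$ be a fixed point of $\phi$ lying in the open Berkovich disk $B_{\vec v}$ (the component of $\mathbb{P}^1_{an}\setminus\{\zeta_{Gauss}\}$ corresponding to $\vec v$). Then $\xi$ is of type $1$, i.e. $\xi\in\mathbb{P}^1(\mathbb{L})$.
   Context: $\mathbb{P}^1_{an}$ is the Berkovich projective line over $\mathbb{L}$; $\zeta_{Gauss}$ is the type $2$ point corresponding to the closed unit disk $D(0,1)$. Directions at $\zeta_{Gauss}$ (connected components of $\mathbb{P}^1_{an}\setminus\{\zeta_{Gauss}\}$) are identified with $\mathbb{P}^1(\tilde{\mathbb{L}})$, $\tilde{\mathbb{L}}$ the residue field, the direction containing $a\in\mathbb{P}^1(\mathbb{L})$ corresponding to its reduction $\tilde a$. The reduction $\tilde\phi$ is obtained by reducing a normalized form of $\phi$ (coprime numerator/denominator, coefficients in the valuation ring, not all in the maximal ideal) modulo the maximal ideal and cancelling common factors; good reduction means $\deg\tilde\phi=\deg\phi$. A critical point of $\tilde\phi$ is a point where $\tilde\phi$ has multiplicity at least $2$. *)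

theory Defs
  imports "HOL-Computational_Algebra.Computational_Algebra" "HOL-Computational_Algebra.Field_as_Ring"
begin

class nonarch_field = field_char_0 +
  fixes nabs :: "'a \<Rightarrow> real"
  assumes nabs_nonneg: "0 \<le> nabs x"
    and nabs_eq_0_iff: "nabs x = 0 \<longleftrightarrow> x = 0"
    and nabs_mult: "nabs (x * y) = nabs x * nabs y"
    and nabs_ultra: "nabs (x + y) \<le> max (nabs x) (nabs y)"

context nonarch_field begin
lemma nabs_one[simp]: "nabs 1 = 1"
proof -
  have "nabs 1 = nabs 1 * nabs 1" using nabs_mult[of 1 1] by simp
  moreover have "nabs 1 \<noteq> 0" using nabs_eq_0_iff by simp
  ultimately show ?thesis by simp
qed
lemma nabs_zero[simp]: "nabs 0 = 0" using nabs_eq_0_iff by simp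
lemma nabs_minus_one: "nabs (-1) = 1"
proof -
  have "nabs (-1) * nabs (-1) = 1" using nabs_mult[of "-1" "-1"] by simp
  then show ?thesis using nabs_nonneg[of "-1"]
    by (metis mult_cancel_right1 mult_eq_0_iff nabs_eq_0_iff nle_le one_neq_zero  mult_right_mono mult_left_mono mult_le_one dual_order.antisym mult_less_cancel_right2 not_le order_less_irrefl)
qed
lemma nabs_minus[simp]: "nabs (- x) = nabs x"
  using nabs_mult[of "-1" x] nabs_minus_one by simp
lemma nabs_diff: "nabs (x - y) \<le> max (nabs x) (nabs y)"
  using nabs_ultra[of x "- y"] by simp
lemma nabs_commute: "nabs (x - y) = nabs (y - x)"
  by (metis minus_diff_eq nabs_minus)
lemma nabs_inverse: "x \<noteq> 0 \<Longrightarrow> nabs (inverse x) = inverse (nabs x)"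
proof -
  assume "x \<noteq> 0"
  then have "nabs x * nabs (inverse x) = 1" "nabs x \<noteq> 0" using nabs_mult[of x "inverse x"] nabs_eq_0_iff by auto
  then show ?thesis by (simp add: field_simps)
qed
lemma nabs_strict: "nabs y < nabs x \<Longrightarrow> nabs (x + y) = nabs x"
proof -
  assume a: "nabs y < nabs x"
  have "nabs x \<le> max (nabs (x+y)) (nabs (-y))" using nabs_ultra[of "x+y" "-y"] by simp
  with a have "nabs x \<le> nabs (x + y)" by (simp add: max_def split: if_splits)
  moreover have "nabs (x+y) \<le> nabs x" using nabs_ultra[of x y] a by simp
  ultimately show ?thesis by simp
qed
end

definition resrel :: "'a::nonarch_field \<Rightarrow> 'a \<Rightarrow> bool" where
  "resrel x y \<longleftrightarrow> nabs x \<le> 1 \<and> nabs y \<le> 1 \<and> nabs (x - y) < 1"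

lemma resrel_part_equivp: "part_equivp (resrel :: 'a::nonarch_field \<Rightarrow> _)"
proof (rule part_equivpI)
  show "\<exists>x::'a. resrel x x" by (rule exI[of _ 0]) (simp add: resrel_def)
  show "symp (resrel :: 'a \<Rightarrow> _)" unfolding symp_def resrel_def using nabs_commute by metis
  show "transp (resrel :: 'a \<Rightarrow> _)" unfolding transp_def resrel_def
  proof (intro allI impI, elim conjE, intro conjI)
    fix x y z :: 'a
    assume "nabs (x - y) < 1" "nabs (y - z) < 1"
    then show "nabs (x - z) < 1" using nabs_ultra[of "x - y" "y - z"] by simp
  qed
qed

quotient_type (overloaded) 'a res = "'a::nonarch_field" / partial: resrel
  by (rule resrel_part_equivp)

lemma resrel_add: "resrel x x' \<Longrightarrow> resrel y y' \<Longrightarrow> resrel (x + y) (x' + y')"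
  unfolding resrel_def using nabs_ultra[of x y] nabs_ultra[of x' y'] nabs_ultra[of "x - x'" "y - y'"]
  by (auto simp: algebra_simps)

lemma resrel_uminus: "resrel x x' \<Longrightarrow> resrel (- x) (- x')"
  unfolding resrel_def by (metis minus_diff_eq minus_diff_minus nabs_minus)

lemma resrel_mult: "resrel x x' \<Longrightarrow> resrel y y' \<Longrightarrow> resrel (x * y) (x' * y')"
proof -
  assume a: "resrel x x'" "resrel y y'"
  then have b: "nabs x \<le> 1" "nabs x' \<le> 1" "nabs y \<le> 1" "nabs y' \<le> 1" "nabs (x - x') < 1" "nabs (y - y') < 1"
    unfolding resrel_def by auto
  have e: "x * y - x' * y' = x * (y - y') + (x - x') * y'" by (simp add: algebra_simps)
  have "nabs (x * (y - y')) < 1" using b nabs_nonneg[of "y - y'"] nabs_nonneg[of x]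
    by (simp add: nabs_mult) (smt (verit) mult_left_le_one_le mult_le_one mult_nonneg_nonneg mult_right_mono)
  moreover have "nabs ((x - x') * y') < 1" using b nabs_nonneg[of "x - x'"] nabs_nonneg[of y']
    by (simp add: nabs_mult) (smt (verit) mult_right_le_one_le mult_le_one mult_nonneg_nonneg mult_left_mono)
  ultimately have "nabs (x * y - x' * y') < 1" unfolding e using nabs_ultra[of "x * (y - y')" "(x - x') * y'"] by simp
  moreover have "nabs (x * y) \<le> 1" "nabs (x' * y') \<le> 1" using b
    by (auto simp: nabs_mult intro!: mult_le_one nabs_nonneg)
  ultimately show ?thesis unfolding resrel_def by simp
qed

definition res_inv :: "'a::nonarch_field \<Rightarrow> 'a" where
  "res_inv x = (if nabs x = 1 then inverse x else 0)"

lemma resrel_sym: "resrel x x' \<Longrightarrow> resrel x' x"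
  unfolding resrel_def using nabs_commute[of x x'] by simp

lemma resrel_unit: "resrel x x' \<Longrightarrow> nabs x = 1 \<Longrightarrow> nabs x' = 1"
proof -
  assume a: "resrel x x'" and b: "nabs x = 1"
  have "nabs (x' - x) < nabs x" using a b nabs_commute[of x x'] unfolding resrel_def by simp
  then have "nabs (x + (x' - x)) = nabs x" by (rule nabs_strict)
  moreover have "x + (x' - x) = x'" by simp
  ultimately show ?thesis using b by simp
qed

lemma resrel_inv: "resrel x x' \<Longrightarrow> resrel (res_inv x) (res_inv x')"
proof -
  assume a: "resrel x x'"
  show ?thesis
  proof (cases "nabs x = 1")
    case True
    then have t: "nabs x' = 1" using resrel_unit[OF a] by simp
    have nz: "x \<noteq> 0" "x' \<noteq> 0" using True t by (auto simp del: nabs_one) 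
    have e: "inverse x - inverse x' = (x' - x) * (inverse x * inverse x')"
    proof -
      have "inverse x - inverse x' = - (inverse x * (x - x') * inverse x')" by (rule inverse_diff_inverse[OF nz])
      also have "\<dots> = (x' - x) * (inverse x * inverse x')" by (simp add: algebra_simps)
      finally show ?thesis .
    qed
    have i1: "nabs (inverse x) = 1" using nabs_inverse[OF nz(1)] True by simp
    have i2: "nabs (inverse x') = 1" using nabs_inverse[OF nz(2)] t by simp
    have "nabs (inverse x - inverse x') = nabs (x' - x) * (nabs (inverse x) * nabs (inverse x'))"
      unfolding e by (simp only: nabs_mult)
    also have "\<dots> = nabs (x - x')" using i1 i2 nabs_commute[of x x'] by simp
    finally have d: "nabs (inverse x - inverse x') = nabs (x - x')" .
    have "res_inv x = inverse x" "res_inv x' = inverse x'" using True t unfolding res_inv_def by auto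
    then show ?thesis using a d i1 i2 unfolding resrel_def by simp
  next
    case False
    then have "nabs x' \<noteq> 1" using resrel_unit resrel_sym a by blast
    then show ?thesis using False unfolding resrel_def res_inv_def by simp
  qed
qed

instantiation res :: (nonarch_field) field
begin
lift_definition zero_res :: "'a res" is "0" by (simp add: resrel_def)
lift_definition one_res :: "'a res" is "1" by (simp add: resrel_def)
lift_definition plus_res :: "'a res \<Rightarrow> 'a res \<Rightarrow> 'a res" is "(+)" by (rule resrel_add)
lift_definition uminus_res :: "'a res \<Rightarrow> 'a res" is "uminus" by (rule resrel_uminus)
lift_definition minus_res :: "'a res \<Rightarrow> 'a res \<Rightarrow> 'a res" is "\<lambda>x y. x + - y"
  by (intro resrel_add resrel_uminus)
lift_definition times_res :: "'a res \<Rightarrow> 'a res \<Rightarrow> 'a res" is "(*)" by (rule resrel_mult)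
lift_definition inverse_res :: "'a res \<Rightarrow> 'a res" is "res_inv" by (rule resrel_inv)
definition divide_res :: "'a res \<Rightarrow> 'a res \<Rightarrow> 'a res" where "divide_res x y = x * inverse y"
instance
proof
  fix a b c :: "'a res"
  show "a * b * c = a * (b * c)" by transfer (metis resrel_mult mult.assoc)
  show "a * b = b * a" by transfer (metis resrel_mult mult.commute)
  show "1 * a = a" by transfer simp
  show "a + b + c = a + (b + c)" by transfer (metis resrel_add add.assoc)
  show "a + b = b + a" by transfer (metis resrel_add add.commute)
  show "0 + a = a" by transfer simp
  show "- a + a = 0" by transfer (simp add: resrel_def)
  show "a - b = a + - b" by transfer (metis resrel_add resrel_uminus)
  show "(a + b) * c = a * c + b * c" by transfer (metis resrel_add resrel_mult distrib_right)
  show "(0::'a res) \<noteq> 1" by transfer (simp add: resrel_def)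
  show "a div b = a * inverse b" by (simp add: divide_res_def)
  show "inverse (0::'a res) = 0" by transfer (simp add: resrel_def res_inv_def)
  show "a \<noteq> 0 \<Longrightarrow> inverse a * a = 1"
  proof transfer
    fix a :: 'a
    assume r: "resrel a a" and n: "\<not> resrel a 0"
    then have "nabs a = 1" unfolding resrel_def by simp
    then have "a \<noteq> 0" using nabs_eq_0_iff by force
    with \<open>nabs a = 1\<close> show "resrel (res_inv a * a) 1" unfolding resrel_def res_inv_def by simp
  qed
qed
end


section \<open>Residue field as a Euclidean ring (so that polynomial gcds exist)\<close>

instantiation res :: (nonarch_field)
  "{unique_euclidean_ring, normalization_euclidean_semiring, normalization_semidom_multiplicative}"
begin
definition [simp]: "normalize_res = (normalize_field :: 'a res \<Rightarrow> _)"
definition [simp]: "unit_factor_res = (unit_factor_field :: 'a res \<Rightarrow> _)"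
definition [simp]: "modulo_res = (mod_field :: 'a res \<Rightarrow> _)"
definition [simp]: "euclidean_size_res = (euclidean_size_field :: 'a res \<Rightarrow> _)"
definition [simp]: "division_segment (x :: 'a res) = 1"
instance
  by standard
    (simp_all add: dvd_field_iff field_split_simps split: if_splits)
end

instantiation res :: (nonarch_field) euclidean_ring_gcd
begin
definition gcd_res :: "'a res \<Rightarrow> 'a res \<Rightarrow> 'a res" where
  "gcd_res = Euclidean_Algorithm.gcd"
definition lcm_res :: "'a res \<Rightarrow> 'a res \<Rightarrow> 'a res" where
  "lcm_res = Euclidean_Algorithm.lcm"
definition Gcd_res :: "'a res set \<Rightarrow> 'a res" where
 "Gcd_res = Euclidean_Algorithm.Gcd"
definition Lcm_res :: "'a res set \<Rightarrow> 'a res" where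
 "Lcm_res = Euclidean_Algorithm.Lcm"
instance by standard (simp_all add: gcd_res_def lcm_res_def Gcd_res_def Lcm_res_def)
end

instance res :: (nonarch_field) field_gcd ..

definition red :: "'a::nonarch_field \<Rightarrow> 'a res" where
  "red x = abs_res x"

definition nabs_nontrivial :: "'a::nonarch_field itself \<Rightarrow> bool" where
  "nabs_nontrivial _ \<longleftrightarrow> (\<exists>x::'a. nabs x \<noteq> 0 \<and> nabs x \<noteq> 1)"

definition nabs_complete :: "'a::nonarch_field itself \<Rightarrow> bool" where
  "nabs_complete _ \<longleftrightarrow> (\<forall>X :: nat \<Rightarrow> 'a.
      (\<forall>e>0. \<exists>N. \<forall>m\<ge>N. \<forall>n\<ge>N. nabs (X m - X n) < e) \<longrightarrow>
      (\<exists>l. \<forall>e>0. \<exists>N. \<forall>n\<ge>N. nabs (X n - l) < e))"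

definition alg_closed :: "'a::field itself \<Rightarrow> bool" where
  "alg_closed _ \<longleftrightarrow> (\<forall>p :: 'a poly. degree p \<ge> 1 \<longrightarrow> (\<exists>x. poly p x = 0))"

text \<open>Points of the Berkovich affine line: multiplicative seminorms on L[T] extending nabs.
  The Berkovich projective line is the affine line together with the point at infinity.\<close>

definition mult_seminorm :: "('a::nonarch_field poly \<Rightarrow> real) \<Rightarrow> bool" where
  "mult_seminorm z \<longleftrightarrow>
     (\<forall>f. 0 \<le> z f) \<and>
     (\<forall>f g. z (f * g) = z f * z g) \<and>
     (\<forall>f g. z (f + g) \<le> z f + z g) \<and>
     (\<forall>c. z [:c:] = nabs c)"

type_synonym 'a berk = "('a poly \<Rightarrow> real) option"

abbreviation BAff :: "('a poly \<Rightarrow> real) \<Rightarrow> 'a berk" where "BAff \<equiv> Some"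
abbreviation BInfty :: "'a berk" where "BInfty \<equiv> None"

definition berk_P1 :: "'a::nonarch_field berk set" where
  "berk_P1 = {BAff z | z. mult_seminorm z} \<union> {BInfty}"

definition type1pt :: "'a::nonarch_field \<Rightarrow> 'a berk" where
  "type1pt a = BAff (\<lambda>f. nabs (poly f a))"

definition is_type1 :: "'a::nonarch_field berk \<Rightarrow> bool" where
  "is_type1 \<xi> \<longleftrightarrow> \<xi> = BInfty \<or> (\<exists>a. \<xi> = type1pt a)"

definition gauss_pt :: "'a::nonarch_field berk" where
  "gauss_pt = BAff (\<lambda>f. Max ((\<lambda>i. nabs (coeff f i)) ` {..degree f}))"

text \<open>A rational map phi = P/Q is given by a pair of coprime polynomials; its degree is
  max(deg P, deg Q).\<close>

definition rat_deg :: "'b::zero poly \<Rightarrow> 'b poly \<Rightarrow> nat" where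
  "rat_deg P Q = max (degree P) (degree Q)"

text \<open>Numerator of g(P/Q) = comp_num P Q g / Q^(deg g).\<close>
definition comp_num :: "'b::comm_ring_1 poly \<Rightarrow> 'b poly \<Rightarrow> 'b poly \<Rightarrow> 'b poly" where
  "comp_num P Q g = (\<Sum>i\<le>degree g. smult (coeff g i) (P ^ i * Q ^ (degree g - i)))"

text \<open>Action on the Berkovich projective line: [g]_{phi(zeta)} = [g o phi]_zeta.\<close>
definition berk_map :: "'a::nonarch_field poly \<Rightarrow> 'a poly \<Rightarrow> 'a berk \<Rightarrow> 'a berk" where
  "berk_map P Q \<xi> = (case \<xi> of
      None \<Rightarrow> (if degree Q < degree P then BInfty
                  else type1pt (coeff P (degree Q) / lead_coeff Q))
    | Some z \<Rightarrow> (if z Q = 0 then BInfty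
                  else BAff (\<lambda>g. z (comp_num P Q g) / z Q ^ degree g)))"

definition normalized :: "'a::nonarch_field poly \<Rightarrow> 'a poly \<Rightarrow> bool" where
  "normalized P Q \<longleftrightarrow> (\<forall>i. nabs (coeff P i) \<le> 1 \<and> nabs (coeff Q i) \<le> 1) \<and>
                        (\<exists>i. nabs (coeff P i) = 1 \<or> nabs (coeff Q i) = 1)"

definition norm_scalar :: "'a::nonarch_field poly \<Rightarrow> 'a poly \<Rightarrow> 'a" where
  "norm_scalar P Q = (SOME c. c \<noteq> 0 \<and> normalized (smult c P) (smult c Q))"

definition red_num0 :: "'a::nonarch_field poly \<Rightarrow> 'a poly \<Rightarrow> 'a res poly" where
  "red_num0 P Q = map_poly red (smult (norm_scalar P Q) P)"
definition red_den0 :: "'a::nonarch_field poly \<Rightarrow> 'a poly \<Rightarrow> 'a res poly" where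
  "red_den0 P Q = map_poly red (smult (norm_scalar P Q) Q)"

definition red_num :: "'a::nonarch_field poly \<Rightarrow> 'a poly \<Rightarrow> 'a res poly" where
  "red_num P Q = red_num0 P Q div gcd (red_num0 P Q) (red_den0 P Q)"
definition red_den :: "'a::nonarch_field poly \<Rightarrow> 'a poly \<Rightarrow> 'a res poly" where
  "red_den P Q = red_den0 P Q div gcd (red_num0 P Q) (red_den0 P Q)"

definition good_reduction :: "'a::nonarch_field poly \<Rightarrow> 'a poly \<Rightarrow> bool" where
  "good_reduction P Q \<longleftrightarrow> rat_deg (red_num P Q) (red_den P Q) = rat_deg P Q"

text \<open>Points of P^1(K) are elements of K option, None being the point at infinity.\<close>

definition rat_eval :: "'b::field poly \<Rightarrow> 'b poly \<Rightarrow> 'b option \<Rightarrow> 'b option" where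
  "rat_eval A B v = (case v of
      Some t \<Rightarrow> (if poly B t = 0 then None else Some (poly A t / poly B t))
    | None \<Rightarrow> (if degree B < degree A then None else Some (coeff A (degree B) / lead_coeff B)))"

text \<open>Multiplicity (local degree) of A/B at v, computed in the affine charts z and 1/z
  around v and its image.\<close>
definition rat_mult :: "'b::field poly \<Rightarrow> 'b poly \<Rightarrow> 'b option \<Rightarrow> nat" where
  "rat_mult A B v = (case v of
      Some t \<Rightarrow> (case rat_eval A B v of
                    Some s \<Rightarrow> order t (A - smult s B)
                  | None \<Rightarrow> order t B)
    | None \<Rightarrow> (case rat_eval A B v of
                    Some s \<Rightarrow> rat_deg A B - degree (A - smult s B)
                  | None \<Rightarrow> degree A - degree B))"

text \<open>Directions at the Gauss point are identified with P^1 of the residue field; the open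
  Berkovich disk B_v for v = red(a), nabs a \<le> 1, is the open disk D(a,1)^-, and for v = infinity
  it is the complement of the closed Berkovich unit disk.\<close>

definition berk_dir_disk :: "'a::nonarch_field res option \<Rightarrow> 'a berk set" where
  "berk_dir_disk v = (case v of
      Some t \<Rightarrow> {BAff z | z a. mult_seminorm z \<and> nabs a \<le> 1 \<and> red a = t \<and> z [:- a, 1:] < 1}
    | None \<Rightarrow> {BAff z | z. mult_seminorm z \<and> z [:0, 1:] > 1} \<union> {BInfty})"

end

theory Submission
  imports Defs
begin

lemma resrel_refl: "nabs (x::'a::nonarch_field) \<le> 1 \<Longrightarrow> resrel x x"
  by (simp add: resrel_def)

lemma red_add: "nabs (x::'a::nonarch_field) \<le> 1 \<Longrightarrow> nabs y \<le> 1 \<Longrightarrow> red (x+y) = red x + red y"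
  unfolding red_def by (simp add: plus_res.abs_eq resrel_refl)
lemma red_mult: "nabs (x::'a::nonarch_field) \<le> 1 \<Longrightarrow> nabs y \<le> 1 \<Longrightarrow> red (x*y) = red x * red y"
  unfolding red_def by (simp add: times_res.abs_eq resrel_refl)
lemma red_uminus: "nabs (x::'a::nonarch_field) \<le> 1 \<Longrightarrow> red (-x) = - red x"
  unfolding red_def by (simp add: uminus_res.abs_eq resrel_refl)
lemma red_diff: "nabs (x::'a::nonarch_field) \<le> 1 \<Longrightarrow> nabs y \<le> 1 \<Longrightarrow> red (x-y) = red x - red y"
  unfolding red_def by (simp add: minus_res.abs_eq resrel_refl)
lemma red_0[simp]: "red (0::'a::nonarch_field) = 0"
  unfolding red_def zero_res_def ..
lemma red_1[simp]: "red (1::'a::nonarch_field) = 1"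
  unfolding red_def one_res_def ..
lemma red_eq_iff: "nabs (x::'a::nonarch_field) \<le> 1 \<Longrightarrow> nabs y \<le> 1 \<Longrightarrow> red x = red y \<longleftrightarrow> nabs (x - y) < 1"
  unfolding red_def using Quotient_rel[OF Quotient_res, of x y] by (auto simp: resrel_def)
lemma red_eq_0_iff: "nabs (x::'a::nonarch_field) \<le> 1 \<Longrightarrow> red x = 0 \<longleftrightarrow> nabs x < 1"
  using red_eq_iff[of x 0] by simp

lemma nabs_of_nat: "nabs (of_nat n :: 'a::nonarch_field) \<le> 1"
proof (induction n)
  case (Suc n)
  then show ?case using nabs_ultra[of "1::'a" "of_nat n"] by (simp add: add.commute)
qed simp

lemma red_of_nat: "red (of_nat n :: 'a::nonarch_field) = of_nat n"
proof (induction n)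
  case (Suc n)
  then show ?case using red_add[of "1::'a" "of_nat n"] nabs_of_nat[of n] by (simp add: add.commute)
qed simp

lemma nabs_sum_le: "finite A \<Longrightarrow> (\<And>i. i \<in> A \<Longrightarrow> nabs (f i :: 'a::nonarch_field) \<le> M) \<Longrightarrow> 0 \<le> M \<Longrightarrow> nabs (sum f A) \<le> M"
proof (induction A rule: finite_induct)
  case (insert x F)
  then have "nabs (f x) \<le> M" by simp
  then show ?case using nabs_ultra[of "f x" "sum f F"] insert by (simp add: order_trans)
qed simp

lemma nabs_mult_le1: "nabs (x::'a::nonarch_field) \<le> 1 \<Longrightarrow> nabs y \<le> 1 \<Longrightarrow> nabs (x*y) \<le> 1"
  by (simp add: nabs_mult mult_le_one nabs_nonneg)

definition intpoly :: "'a::nonarch_field poly \<Rightarrow> bool" where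
  "intpoly p \<longleftrightarrow> (\<forall>i. nabs (coeff p i) \<le> 1)"

lemma intpoly_pCons: "intpoly (pCons a p) \<longleftrightarrow> nabs a \<le> 1 \<and> intpoly p"
  unfolding intpoly_def by (auto simp: coeff_pCons split: nat.splits)

lemma intpoly_0[simp]: "intpoly 0" by (simp add: intpoly_def)

lemma intpoly_poly: "intpoly p \<Longrightarrow> nabs x \<le> 1 \<Longrightarrow> nabs (poly p x) \<le> 1"
proof (induction p)
  case (pCons a p)
  then have "nabs (x * poly p x) \<le> 1" "nabs a \<le> 1" by (auto simp: intpoly_pCons nabs_mult_le1)
  then show ?case using nabs_ultra[of a "x * poly p x"] by simp
qed simp

lemma red_poly: "intpoly p \<Longrightarrow> nabs x \<le> 1 \<Longrightarrow> red (poly p x) = poly (map_poly red p) (red x)"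
proof (induction p)
  case (pCons a p)
  have i: "nabs a \<le> 1" "intpoly p" using pCons by (auto simp: intpoly_pCons)
  have "red (poly (pCons a p) x) = red a + red x * red (poly p x)"
    using i pCons intpoly_poly[of p x] by (simp add: red_add red_mult nabs_mult_le1)
  also have "\<dots> = poly (map_poly red (pCons a p)) (red x)"
    using pCons i by (simp add: map_poly_pCons)
  finally show ?case .
qed simp

lemma intpoly_pderiv: "intpoly p \<Longrightarrow> intpoly (pderiv p)"
  unfolding intpoly_def coeff_pderiv by (metis nabs_mult_le1 nabs_of_nat)

lemma map_poly_red_pderiv: "intpoly p \<Longrightarrow> map_poly red (pderiv p) = pderiv (map_poly red p)"
  by (rule poly_eqI) (simp add: coeff_map_poly coeff_pderiv intpoly_def red_mult nabs_of_nat red_of_nat del: of_nat_Suc)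

lemma intpoly_add: "intpoly p \<Longrightarrow> intpoly q \<Longrightarrow> intpoly (p + q)"
  unfolding intpoly_def using nabs_ultra by (simp add: order_trans[OF nabs_ultra])
lemma intpoly_uminus: "intpoly p \<Longrightarrow> intpoly (- p)"
  unfolding intpoly_def by simp
lemma intpoly_diff: "intpoly p \<Longrightarrow> intpoly q \<Longrightarrow> intpoly (p - q)"
  using intpoly_add[of p "-q"] intpoly_uminus[of q] by simp
lemma intpoly_mult: "intpoly p \<Longrightarrow> intpoly q \<Longrightarrow> intpoly (p * q)"
  unfolding intpoly_def coeff_mult by (auto intro!: nabs_sum_le nabs_mult_le1)
lemma intpoly_smult: "nabs c \<le> 1 \<Longrightarrow> intpoly q \<Longrightarrow> intpoly (smult c q)"
  unfolding intpoly_def by (simp add: nabs_mult_le1)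
lemma intpoly_const: "nabs c \<le> 1 \<Longrightarrow> intpoly [:c:]"
  unfolding intpoly_def by (simp add: coeff_pCons split: nat.splits)
lemma intpoly_synthetic_div: "intpoly p \<Longrightarrow> nabs c \<le> 1 \<Longrightarrow> intpoly (synthetic_div p c)"
proof (induction p)
  case (pCons a p)
  then show ?case by (simp add: intpoly_pCons intpoly_poly)
qed simp

lemma exp_beats_lin:
  fixes r :: real assumes r: "1 < r" shows "\<exists>n::nat. real n + 1 < r ^ n"
proof -
  define h where "h = sqrt r - 1"
  have h: "0 < h" using r by (simp add: h_def)
  obtain n :: nat where n: "2 / h^2 < real n" using reals_Archimedean2 by blast
  have "0 < 2 / h^2" using h by simp
  then have "0 < real n" using n by linarith
  then have n1: "1 \<le> real n" by simp
  have "2 < real n * h^2" using n h by (simp add: field_simps)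
  have b: "1 + real n * h \<le> (1 + h) ^ n" using Bernoulli_inequality[of h n] h by simp
  have s: "1 + h = sqrt r" by (simp add: h_def)
  have "r = (1 + h)^2" unfolding s using r by simp
  then have "r ^ n = ((1 + h)^2) ^ n" by simp
  also have "\<dots> = ((1 + h) ^ n)^2" by (metis power_mult mult.commute)
  also have "\<dots> \<ge> (real n * h)^2" using b h by (intro power_mono) auto
  finally have "r ^ n \<ge> real n * (real n * h^2)" by (simp add: power2_eq_square algebra_simps)
  moreover have "real n * (real n * h^2) > real n * 2" using \<open>2 < real n * h^2\<close> n1 by simp
  ultimately show ?thesis using n1 by (intro exI[of _ n]) linarith
qed

lemma ms_basic:
  assumes "mult_seminorm z"
  shows "z 0 = 0" "z 1 = 1" "\<And>f g. z (f * g) = z f * z g" "\<And>f. 0 \<le> z f" "\<And>f g. z (f + g) \<le> z f + z g"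
    "\<And>c. z [:c:] = nabs c"
  using assms unfolding mult_seminorm_def
  by (metis nabs_zero pCons_0_0, metis nabs_one one_pCons, auto)

lemma ms_power: "mult_seminorm z \<Longrightarrow> z (f ^ n) = z f ^ n"
  by (induction n) (simp_all add: ms_basic)

lemma ms_sum_le: assumes "mult_seminorm z" shows "finite A \<Longrightarrow> z (sum f A) \<le> (\<Sum>i\<in>A. z (f i))"
proof (induction A rule: finite_induct)
  case (insert x F)
  then show ?case using ms_basic(5)[OF assms, of "f x" "sum f F"] by simp
qed (simp add: ms_basic assms)

lemma ms_ultra:
  assumes z: "mult_seminorm z"
  shows "z (f + g) \<le> max (z f) (z g)"
proof -
  define M where "M = max (z f) (z g)"
  define x where "x = z (f + g)"
  have M0: "0 \<le> M" using ms_basic(4)[OF z] by (simp add: M_def le_max_iff_disj)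
  have bound: "x ^ n \<le> (real n + 1) * M ^ n" for n
  proof -
    have "x ^ n = z ((f + g) ^ n)" by (simp add: x_def ms_power[OF z])
    also have "\<dots> = z (\<Sum>k\<le>n. of_nat (n choose k) * f ^ k * g ^ (n - k))" by (simp add: binomial_ring)
    also have "\<dots> \<le> (\<Sum>k\<le>n. z (of_nat (n choose k) * f ^ k * g ^ (n - k)))" by (rule ms_sum_le[OF z]) simp
    also have "\<dots> \<le> (\<Sum>k\<le>n. M ^ n)"
    proof (rule sum_mono)
      fix k assume k: "k \<in> {..n}"
      have "z (of_nat (n choose k) * f ^ k * g ^ (n - k)) = nabs (of_nat (n choose k) :: 'a) * (z f ^ k * z g ^ (n - k))"
        by (simp only: of_nat_poly ms_basic(3)[OF z] ms_basic(6)[OF z] ms_power[OF z] mult.assoc)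
      also have "\<dots> \<le> 1 * (M ^ k * M ^ (n - k))"
        using nabs_of_nat ms_basic(4)[OF z] M0
        by (intro mult_mono power_mono) (auto simp: M_def)
      also have "\<dots> = M ^ n" using k by (simp add: power_add[symmetric])
      finally show "z (of_nat (n choose k) * f ^ k * g ^ (n - k)) \<le> M ^ n" .
    qed
    also have "\<dots> = (real n + 1) * M ^ n" by simp
    finally show ?thesis .
  qed
  show ?thesis
  proof (rule ccontr)
    assume "\<not> ?thesis"
    then have xM: "M < x" unfolding x_def M_def by linarith
    show False
    proof (cases "M = 0")
      case True
      then show False using bound[of 1] xM by simp
    next
      case False
      then have Mp: "0 < M" using M0 by simp
      have "1 < x / M" using xM Mp by simp
      then obtain n where n: "real n + 1 < (x / M) ^ n" using exp_beats_lin by blast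
      then have "(real n + 1) * M ^ n < x ^ n" using Mp by (simp add: power_divide field_simps)
      then show False using bound[of n] by simp
    qed
  qed
qed

definition usn :: "('a::nonarch_field poly \<Rightarrow> real) \<Rightarrow> bool" where
  "usn z \<longleftrightarrow> (\<forall>f. 0 \<le> z f) \<and> (\<forall>f g. z (f * g) = z f * z g) \<and>
      (\<forall>f g. z (f + g) \<le> max (z f) (z g)) \<and> (\<forall>c. z [:c:] = nabs c)"

lemma ms_usn: "mult_seminorm z \<Longrightarrow> usn z"
  unfolding usn_def using ms_basic[of z] ms_ultra[of z] by auto

context
  fixes z :: "'a::nonarch_field poly \<Rightarrow> real"
  assumes z: "usn z"
begin
lemma usn_nonneg: "0 \<le> z f" using z by (simp add: usn_def)
lemma usn_mult: "z (f * g) = z f * z g" using z by (simp add: usn_def)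
lemma usn_ultra: "z (f + g) \<le> max (z f) (z g)" using z by (simp add: usn_def)
lemma usn_const: "z [:c:] = nabs c" using z by (simp add: usn_def)
lemma usn_0: "z 0 = 0" using usn_const[of 0] by simp
lemma usn_1: "z 1 = 1" using usn_const[of 1] by (simp add: one_pCons)
lemma usn_smult: "z (smult c f) = nabs c * z f"
  using usn_mult[of "[:c:]" f] usn_const[of c] by simp
lemma usn_uminus: "z (- f) = z f"
  using usn_smult[of "-1" f] by simp
lemma usn_diff: "z (f - g) \<le> max (z f) (z g)"
  using usn_ultra[of f "-g"] usn_uminus[of g] by simp
lemma usn_diff_commute: "z (f - g) = z (g - f)"
  using usn_uminus[of "f - g"] by simp
lemma usn_strict: "z g < z f \<Longrightarrow> z (f + g) = z f"
proof -
  assume a: "z g < z f"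
  have "z f \<le> max (z (f + g)) (z g)" using usn_diff[of "f + g" g] by simp
  then have "z f \<le> z (f + g)" using a by (simp add: max_def split: if_splits)
  moreover have "z (f + g) \<le> z f" using usn_ultra[of f g] a by simp
  ultimately show ?thesis by simp
qed
lemma usn_power: "z (f ^ n) = z f ^ n"
  by (induction n) (simp_all add: usn_1 usn_mult)
lemma usn_sum_le: "finite A \<Longrightarrow> (\<And>i. i \<in> A \<Longrightarrow> z (f i) \<le> M) \<Longrightarrow> 0 \<le> M \<Longrightarrow> z (sum f A) \<le> M"
proof (induction A rule: finite_induct)
  case (insert x F)
  then have "z (f x) \<le> M" by simp
  then show ?case using usn_ultra[of "f x" "sum f F"] insert by (simp add: order_trans)
qed (simp add: usn_0)
lemma usn_intpoly_le: "z [:0,1:] \<le> 1 \<Longrightarrow> intpoly p \<Longrightarrow> z p \<le> 1"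
proof (induction p)
  case (pCons a p)
  have e: "pCons a p = [:a:] + [:0,1:] * p" by simp
  have "z ([:0,1:] * p) = z [:0,1:] * z p" by (rule usn_mult)
  then have "z ([:0,1:] * p) \<le> 1" using pCons by (simp add: intpoly_pCons mult_le_one usn_nonneg)
  moreover have "z [:a:] \<le> 1" using pCons by (simp add: usn_const intpoly_pCons)
  ultimately show ?case unfolding e using usn_ultra[of "[:a:]" "[:0,1:] * p"] by simp
qed (simp add: usn_0)
end


lemma poly_diff_bound:
  assumes "intpoly g" "nabs a \<le> 1" "nabs c \<le> 1"
  shows "nabs (poly g c - poly g a) \<le> nabs (c - a)"
proof -
  have "poly g c = poly ([:-a, 1:] * synthetic_div g a + [:poly g a:]) c"
    by (simp only: synthetic_div_correct')
  also have "\<dots> = (c - a) * poly (synthetic_div g a) c + poly g a"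
    by (simp only: poly_add poly_mult) (simp add: algebra_simps)
  finally have "poly g c - poly g a = (c - a) * poly (synthetic_div g a) c" by simp
  moreover have "nabs (poly (synthetic_div g a) c) \<le> 1"
    using assms by (intro intpoly_poly intpoly_synthetic_div)
  ultimately show ?thesis by (simp add: nabs_mult mult_left_le nabs_nonneg)
qed


lemma z_diff_bound:
  assumes z: "usn z" and zT: "z [:0,1:] \<le> 1" and g: "intpoly g" and a: "nabs a \<le> 1"
  shows "z (g - [:poly g a:]) \<le> z [:-a,1:]"
proof -
  have e: "g - [:poly g a:] = [:-a, 1:] * synthetic_div g a"
  proof -
    have "g - [:poly g a:] = ([:-a, 1:] * synthetic_div g a + [:poly g a:]) - [:poly g a:]"
      by (simp only: synthetic_div_correct')
    also have "\<dots> = [:-a, 1:] * synthetic_div g a" by (rule add_diff_cancel_right')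
    finally show ?thesis .
  qed
  have "z (synthetic_div g a) \<le> 1"
    by (rule usn_intpoly_le[OF z zT intpoly_synthetic_div[OF g a]])
  moreover have "0 \<le> z [:-a,1:]" by (rule usn_nonneg[OF z])
  ultimately have "z [:-a,1:] * z (synthetic_div g a) \<le> z [:-a,1:]"
    by (simp add: mult_left_le)
  then show ?thesis unfolding e usn_mult[OF z] .
qed

lemma sd_eval_pderiv: "poly (synthetic_div g c) c = poly (pderiv g) (c::'a::idom)"
proof -
  have "poly (pderiv g) c = poly (pderiv ([:-c, 1:] * synthetic_div g c + [:poly g c:])) c"
    by (simp only: synthetic_div_correct')
  also have "\<dots> = poly (synthetic_div g c) c"
    by (simp only: pderiv_add pderiv_mult) (simp add: pderiv_pCons)
  finally show ?thesis by simp
qed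

lemma smult_cancel_aux:
  fixes L X Y :: "'a::comm_ring_1 poly"
  shows "smult a (L * X + [:b:]) - smult b (L * Y + [:a:]) = L * (smult a X - smult b Y)"
  by (simp add: smult_add_right right_diff_distrib mult.commute)

lemma core_step:
  fixes z :: "'a::nonarch_field poly \<Rightarrow> real" and P Q :: "'a poly"
  assumes z: "usn z"
    and iP: "intpoly P" and iQ: "intpoly Q"
    and a: "nabs a \<le> 1" and za: "z [:-a,1:] < 1"
    and Qa: "nabs (poly Q a) = 1"
    and fx: "\<And>c. z [:-c,1:] * z Q = z (P - smult c Q)"
    and c: "z [:-c,1:] \<le> z [:-a,1:]"
  shows "z [:-(poly P c / poly Q c), 1:] \<le> max (nabs (poly (Q * pderiv P - P * pderiv Q) a)) (z [:-a,1:]) * z [:-c,1:]"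
proof -
  define s0 where "s0 = z [:-a,1:]"
  define W where "W = Q * pderiv P - P * pderiv Q"
  define \<kappa> where "\<kappa> = max (nabs (poly W a)) s0"
  have iW: "intpoly W" unfolding W_def
    by (intro intpoly_diff intpoly_mult intpoly_pderiv iP iQ)
  have zT: "z [:0,1:] \<le> 1"
  proof -
    have "[:0,1:] = [:-a,1:] + [:a:]" by simp
    then have "z [:0,1:] \<le> max (z [:-a,1:]) (z [:a:])" using usn_ultra[OF z] by metis
    then show ?thesis using za a by (simp add: usn_const[OF z])
  qed
  have zQ: "z Q = 1"
  proof -
    have "z (Q - [:poly Q a:]) \<le> z [:-a,1:]" by (rule z_diff_bound[OF z zT iQ a])
    then have lt: "z (Q - [:poly Q a:]) < z [:poly Q a:]" using za Qa by (simp add: usn_const[OF z])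
    have "Q = [:poly Q a:] + (Q - [:poly Q a:])" by simp
    then have "z Q = z ([:poly Q a:] + (Q - [:poly Q a:]))" by simp
    also have "\<dots> = z [:poly Q a:]" by (rule usn_strict[OF z lt])
    finally show ?thesis using Qa by (simp add: usn_const[OF z])
  qed
  have ca: "nabs (c - a) \<le> s0"
  proof -
    have "[:c - a:] = [:-a,1:] - [:-c,1:]" by simp
    then have "z [:c - a:] \<le> max (z [:-a,1:]) (z [:-c,1:])" using usn_diff[OF z] by metis
    then show ?thesis using c by (simp add: usn_const[OF z] s0_def)
  qed
  have s01: "s0 < 1" using za by (simp add: s0_def)
  have c1: "nabs c \<le> 1"
  proof -
    have "nabs ((c - a) + a) \<le> max (nabs (c - a)) (nabs a)" by (rule nabs_ultra)
    then show ?thesis using ca s01 a by simp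
  qed
  have Qc: "nabs (poly Q c) = 1"
  proof -
    have "nabs (poly Q c - poly Q a) \<le> nabs (c - a)" by (rule poly_diff_bound[OF iQ a c1])
    then have "nabs (poly Q c - poly Q a) < nabs (poly Q a)" using ca s01 Qa by simp
    then have "nabs (poly Q a + (poly Q c - poly Q a)) = nabs (poly Q a)" by (rule nabs_strict)
    then show ?thesis using Qa by simp
  qed
  have Qc0: "poly Q c \<noteq> 0" using Qc by auto
  have Pc: "nabs (poly P c) \<le> 1" by (rule intpoly_poly[OF iP c1])
  define Dp where "Dp = synthetic_div P c"
  define Dq where "Dq = synthetic_div Q c"
  have iDp: "intpoly Dp" unfolding Dp_def by (rule intpoly_synthetic_div[OF iP c1])
  have iDq: "intpoly Dq" unfolding Dq_def by (rule intpoly_synthetic_div[OF iQ c1])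
  define H where "H = smult (poly Q c) Dp - smult (poly P c) Dq"
  have eP: "P = [:-c, 1:] * Dp + [:poly P c:]" unfolding Dp_def by (simp only: synthetic_div_correct')
  have eQ: "Q = [:-c, 1:] * Dq + [:poly Q c:]" unfolding Dq_def by (simp only: synthetic_div_correct')
  have eH: "smult (poly Q c) P - smult (poly P c) Q = [:-c, 1:] * H"
  proof -
    have "smult (poly Q c) P - smult (poly P c) Q =
      smult (poly Q c) ([:-c, 1:] * Dp + [:poly P c:]) - smult (poly P c) ([:-c, 1:] * Dq + [:poly Q c:])"
      using eP eQ by simp
    also have "\<dots> = [:-c, 1:] * H" unfolding H_def by (rule smult_cancel_aux)
    finally show ?thesis .
  qed
  have Wc: "poly W c = poly Q c * poly Dp c - poly P c * poly Dq c"
    unfolding W_def Dp_def Dq_def by (simp add: sd_eval_pderiv)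
  have eH2: "H - [:poly W c:] = smult (poly Q c) (Dp - [:poly Dp c:]) - smult (poly P c) (Dq - [:poly Dq c:])"
    unfolding H_def Wc by (simp add: smult_diff_right)
  have b1: "z (smult (poly Q c) (Dp - [:poly Dp c:])) \<le> z [:-c,1:]"
    using z_diff_bound[OF z zT iDp c1] Qc by (simp add: usn_smult[OF z])
  have b2: "z (smult (poly P c) (Dq - [:poly Dq c:])) \<le> z [:-c,1:]"
  proof -
    have "z (smult (poly P c) (Dq - [:poly Dq c:])) = nabs (poly P c) * z (Dq - [:poly Dq c:])"
      by (rule usn_smult[OF z])
    also have "\<dots> \<le> 1 * z [:-c,1:]"
      using z_diff_bound[OF z zT iDq c1] Pc usn_nonneg[OF z] nabs_nonneg
      by (intro mult_mono) auto
    finally show ?thesis by simp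
  qed
  have zHW: "z (H - [:poly W c:]) \<le> \<kappa>"
  proof -
    have "z (H - [:poly W c:]) \<le> z [:-c,1:]"
      unfolding eH2 using usn_diff[OF z] b1 b2 by (meson max.bounded_iff order_trans)
    then show ?thesis using c by (simp add: \<kappa>_def s0_def)
  qed
  have nWc: "nabs (poly W c) \<le> \<kappa>"
  proof -
    have "nabs (poly W c - poly W a) \<le> nabs (c - a)" by (rule poly_diff_bound[OF iW a c1])
    then have "nabs (poly W c - poly W a) \<le> \<kappa>" using ca by (simp add: \<kappa>_def)
    moreover have "nabs (poly W a + (poly W c - poly W a)) \<le> max (nabs (poly W a)) (nabs (poly W c - poly W a))"
      by (rule nabs_ultra)
    ultimately show ?thesis by (simp add: \<kappa>_def)
  qed
  have zH: "z H \<le> \<kappa>"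
  proof -
    have "H = [:poly W c:] + (H - [:poly W c:])" by simp
    then have "z H \<le> max (z [:poly W c:]) (z (H - [:poly W c:]))" using usn_ultra[OF z] by metis
    then show ?thesis using zHW nWc by (simp add: usn_const[OF z])
  qed
  define c' where "c' = poly P c / poly Q c"
  have "P - smult c' Q = smult (inverse (poly Q c)) (smult (poly Q c) P - smult (poly P c) Q)"
    using Qc0 by (simp add: c'_def smult_diff_right divide_inverse mult.commute)
  then have "z (P - smult c' Q) = nabs (inverse (poly Q c)) * (z [:-c,1:] * z H)"
    by (simp only: eH usn_smult[OF z] usn_mult[OF z])
  then have "z (P - smult c' Q) = z [:-c,1:] * z H"
    using Qc Qc0 by (simp add: nabs_inverse)
  moreover have "z [:-c',1:] = z (P - smult c' Q)" using fx[of c'] zQ by simp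
  ultimately have "z [:-c',1:] = z [:-c,1:] * z H" by simp
  also have "\<dots> \<le> z [:-c,1:] * \<kappa>" using zH usn_nonneg[OF z] by (simp add: mult_left_mono)
  finally show ?thesis by (simp add: c'_def \<kappa>_def W_def s0_def mult.commute)
qed

lemma small_eps:
  fixes e :: real assumes "0 < e" shows "\<exists>N::nat. \<forall>n\<ge>N. 1 / (real n + 1) < e"
proof -
  obtain N :: nat where N: "inverse (real (Suc N)) < e" using reals_Archimedean[OF assms] by blast
  have "1 / (real n + 1) < e" if "n \<ge> N" for n
  proof -
    have "1 / (real n + 1) \<le> 1 / (real N + 1)" using that by (intro divide_left_mono) auto
    then show ?thesis using N by (simp add: inverse_eq_divide add.commute)
  qed
  then show ?thesis by blast
qed

lemma core:
  fixes z :: "'a::nonarch_field poly \<Rightarrow> real" and P Q :: "'a poly"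
  assumes z: "usn z"
    and complete: "nabs_complete TYPE('a)"
    and nz: "\<And>f. f \<noteq> 0 \<Longrightarrow> z f \<noteq> 0"
    and iP: "intpoly P" and iQ: "intpoly Q"
    and a: "nabs a \<le> 1" and za: "z [:-a,1:] < 1"
    and Qa: "nabs (poly Q a) = 1"
    and Wa: "nabs (poly (Q * pderiv P - P * pderiv Q) a) < 1"
    and fx: "\<And>c. z [:-c,1:] * z Q = z (P - smult c Q)"
  shows False
proof -
  define s0 where "s0 = z [:-a,1:]"
  define \<kappa> where "\<kappa> = max (nabs (poly (Q * pderiv P - P * pderiv Q) a)) s0"
  have step: "z [:-(poly P c / poly Q c), 1:] \<le> \<kappa> * z [:-c,1:]" if "z [:-c,1:] \<le> s0" for c
    using core_step[OF z iP iQ a za Qa fx, of c] that by (simp add: \<kappa>_def s0_def)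
  have s0p: "0 < s0"
  proof -
    have "z [:-a,1:] \<noteq> 0" by (rule nz) simp
    then show ?thesis using usn_nonneg[OF z, of "[:-a,1:]"] by (simp add: s0_def)
  qed
  have kp: "0 < \<kappa>" using s0p by (simp add: \<kappa>_def)
  have k1: "\<kappa> < 1" using Wa za by (simp add: \<kappa>_def s0_def)
  define S where "S = range (\<lambda>b. z [:-b,1:])"
  have bdd: "bdd_below S" unfolding S_def bdd_below_def using usn_nonneg[OF z] by blast
  have ne: "S \<noteq> {}" unfolding S_def by simp
  define d where "d = Inf S"
  have low: "d \<le> z [:-b,1:]" for b unfolding d_def S_def
    using bdd S_def by (intro cInf_lower) auto
  have d0: "0 \<le> d" unfolding d_def using ne
    by (intro cInf_greatest) (auto simp: S_def usn_nonneg[OF z])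
  show False
  proof (cases "d > 0")
    case True
    have "d < d / \<kappa>" using True kp k1 by (simp add: less_divide_eq)
    then obtain y where "y \<in> S" "y < d / \<kappa>" using cInf_less_iff[OF ne bdd] d_def by blast
    then obtain b where b: "z [:-b,1:] < d / \<kappa>" unfolding S_def by blast
    define c where "c = (if z [:-b,1:] \<le> s0 then b else a)"
    have c1: "z [:-c,1:] \<le> s0" unfolding c_def by (simp add: s0_def)
    have c2: "z [:-c,1:] < d / \<kappa>" unfolding c_def using b by (auto simp: s0_def)
    have "z [:-(poly P c / poly Q c), 1:] \<le> \<kappa> * z [:-c,1:]" by (rule step[OF c1])
    also have "\<dots> < d" using c2 kp by (simp add: less_divide_eq mult.commute)
    finally show False using low[of "poly P c / poly Q c"] by simp
  next
    case False
    then have d00: "d = 0" using d0 by simp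
    have "\<exists>b. z [:-b,1:] < 1 / (real n + 1)" for n :: nat
    proof -
      have "d < 1 / (real n + 1)" using d00 by simp
      then obtain y where "y \<in> S" "y < 1 / (real n + 1)" using cInf_less_iff[OF ne bdd] d_def by blast
      then show ?thesis unfolding S_def by blast
    qed
    then obtain bs where bs: "\<And>n. z [:-bs n,1:] < 1 / (real n + 1)" by metis
    have diffb: "nabs (bs m - bs n) \<le> max (z [:-bs n,1:]) (z [:-bs m,1:])" for m n
    proof -
      have "[:bs m - bs n:] = [:-bs n,1:] - [:-bs m,1:]" by simp
      then show ?thesis using usn_diff[OF z, of "[:-bs n,1:]" "[:-bs m,1:]"] by (simp add: usn_const[OF z])
    qed
    have "\<forall>e>0. \<exists>N. \<forall>m\<ge>N. \<forall>n\<ge>N. nabs (bs m - bs n) < e"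
    proof (intro allI impI)
      fix e :: real assume "0 < e"
      then obtain N where N: "\<forall>n\<ge>N. 1 / (real n + 1) < e" using small_eps by blast
      have "nabs (bs m - bs n) < e" if "m \<ge> N" "n \<ge> N" for m n
        using diffb[of m n] bs[of m] bs[of n] N that by (smt (verit))
      then show "\<exists>N. \<forall>m\<ge>N. \<forall>n\<ge>N. nabs (bs m - bs n) < e" by blast
    qed
    then obtain l where l: "\<forall>e>0. \<exists>N. \<forall>n\<ge>N. nabs (bs n - l) < e"
      using complete unfolding nabs_complete_def by blast
    have "z [:-l,1:] < e" if e: "0 < e" for e
    proof -
      obtain N1 where N1: "\<forall>n\<ge>N1. nabs (bs n - l) < e" using l e by blast
      obtain N2 where N2: "\<forall>n\<ge>N2. 1 / (real n + 1) < e" using small_eps[OF e] by blast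
      define n where "n = max N1 N2"
      have "[:-l,1:] = [:-bs n,1:] + [:bs n - l:]" by simp
      then have "z [:-l,1:] \<le> max (z [:-bs n,1:]) (z [:bs n - l:])" using usn_ultra[OF z] by metis
      moreover have "z [:-bs n,1:] < e" using bs[of n] N2[rule_format, of n] by (simp add: n_def)
      moreover have "z [:bs n - l:] < e" using N1 by (simp add: n_def usn_const[OF z])
      ultimately show ?thesis by simp
    qed
    then have "z [:-l,1:] \<le> 0" by (metis not_le field_lbound_gt_zero less_irrefl order_less_trans zero_less_one)
    then have "z [:-l,1:] = 0" using usn_nonneg[OF z, of "[:-l,1:]"] by simp
    moreover have "z [:-l,1:] \<noteq> 0" by (rule nz) simp
    ultimately show False by simp
  qed
qed

lemma vanish_linear:
  fixes z :: "'a::nonarch_field poly \<Rightarrow> real"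
  assumes z: "usn z" and closed: "alg_closed TYPE('a)"
  shows "h \<noteq> 0 \<Longrightarrow> z h = 0 \<Longrightarrow> \<exists>c. z [:-c,1:] = 0"
proof (induction "degree h" arbitrary: h rule: less_induct)
  case less
  show ?case
  proof (cases "degree h = 0")
    case True
    then have "h = [:coeff h 0:]" by (metis degree_0_id)
    moreover have "coeff h 0 \<noteq> 0" using True less.prems(1) leading_coeff_0_iff by fastforce
    ultimately have "z h \<noteq> 0" using usn_const[OF z, of "coeff h 0"] by (metis nabs_eq_0_iff)
    then show ?thesis using less.prems by simp
  next
    case False
    then have "degree h \<ge> 1" by simp
    then obtain r where r: "poly h r = 0" using closed unfolding alg_closed_def by blast
    have e: "h = [:-r,1:] * synthetic_div h r" using synthetic_div_correct'[of r h] r by simp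
    then have "z [:-r,1:] * z (synthetic_div h r) = 0" using less.prems usn_mult[OF z] by metis
    then consider "z [:-r,1:] = 0" | "z (synthetic_div h r) = 0" by auto
    then show ?thesis
    proof cases
      case 2
      have "synthetic_div h r \<noteq> 0" using e less.prems(1) by auto
      moreover have "degree (synthetic_div h r) < degree h" using False by (simp add: degree_synthetic_div)
      ultimately show ?thesis using less.hyps 2 by blast
    qed blast
  qed
qed

lemma vanish_type1:
  fixes z :: "'a::nonarch_field poly \<Rightarrow> real"
  assumes z: "usn z" and c: "z [:-c,1:] = 0"
  shows "z = (\<lambda>f. nabs (poly f c))"
proof
  fix f
  have e: "f - [:poly f c:] = [:-c,1:] * synthetic_div f c"
  proof -
    have "f - [:poly f c:] = ([:-c, 1:] * synthetic_div f c + [:poly f c:]) - [:poly f c:]"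
      by (simp only: synthetic_div_correct')
    also have "\<dots> = [:-c, 1:] * synthetic_div f c" by (rule add_diff_cancel_right')
    finally show ?thesis .
  qed
  have z0: "z (f - [:poly f c:]) = 0" unfolding e usn_mult[OF z] c by simp
  have "f = [:poly f c:] + (f - [:poly f c:])" by simp
  then have "z f \<le> max (z [:poly f c:]) (z (f - [:poly f c:]))" using usn_ultra[OF z] by metis
  then have 1: "z f \<le> nabs (poly f c)" using z0 usn_const[OF z] nabs_nonneg[of "poly f c"] by (simp add: max.absorb1)
  have "[:poly f c:] = f - (f - [:poly f c:])" by simp
  then have "z [:poly f c:] \<le> max (z f) (z (f - [:poly f c:]))" using usn_diff[OF z] by metis
  then have 2: "nabs (poly f c) \<le> z f" using z0 usn_const[OF z] usn_nonneg[OF z] by simp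
  show "z f = nabs (poly f c)" using 1 2 by simp
qed

definition rv :: "nat \<Rightarrow> 'a::comm_ring_1 poly \<Rightarrow> 'a poly" where
  "rv N g = monom 1 (N - degree g) * reflect_poly g"

lemma coeff_rv: "degree g \<le> N \<Longrightarrow> coeff (rv N g) j = (if j \<le> N then coeff g (N - j) else 0)"
  unfolding rv_def coeff_monom_mult coeff_reflect_poly
  by (auto simp: coeff_eq_0)

lemma degree_rv: "degree g \<le> N \<Longrightarrow> degree (rv N g) \<le> N"
  by (rule degree_le) (simp add: coeff_rv)

lemma rv_rv: "degree g \<le> N \<Longrightarrow> rv N (rv N g) = g"
  by (rule poly_eqI) (auto simp: coeff_rv degree_rv coeff_eq_0)

lemma rv_add: "degree f \<le> N \<Longrightarrow> degree g \<le> N \<Longrightarrow> rv N (f + g) = rv N f + rv N g"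
  by (rule poly_eqI) (simp add: coeff_rv degree_add_le)

lemma rv_diff: "degree f \<le> N \<Longrightarrow> degree g \<le> N \<Longrightarrow> rv N (f - g) = rv N f - rv N g"
  by (rule poly_eqI) (simp add: coeff_rv degree_diff_le)

lemma rv_smult: "degree f \<le> N \<Longrightarrow> rv N (smult c f) = smult c (rv N f)"
  by (rule poly_eqI) (simp add: coeff_rv le_trans[OF degree_smult_le])

lemma intpoly_rv: "intpoly g \<Longrightarrow> degree g \<le> N \<Longrightarrow> intpoly (rv N g)"
  unfolding intpoly_def by (simp add: coeff_rv)

lemma rv_lin: "rv 1 [:-c, 1:] = [:1, -c:]"
proof (rule poly_eqI)
  fix j
  show "coeff (rv 1 [:-c, 1:]) j = coeff [:1, -c:] j"
    by (cases j; cases "j - 1") (auto simp: coeff_rv)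
qed

definition zconj :: "('a::nonarch_field poly \<Rightarrow> real) \<Rightarrow> 'a poly \<Rightarrow> real" where
  "zconj z g = z (reflect_poly g) / z [:0,1:] ^ degree g"

context
  fixes z :: "'a::nonarch_field poly \<Rightarrow> real"
  assumes z: "usn z" and zT: "0 < z [:0,1:]"
begin

lemma z_rv: "degree g \<le> N \<Longrightarrow> z (rv N g) = z [:0,1:] ^ (N - degree g) * z (reflect_poly g)"
  unfolding rv_def by (simp add: usn_mult[OF z] usn_power[OF z] monom_altdef usn_smult[OF z])

lemma zconj_alt: "degree g \<le> N \<Longrightarrow> zconj z g = z (rv N g) / z [:0,1:] ^ N"
proof -
  assume g: "degree g \<le> N"
  have "z [:0,1:] ^ N = z [:0,1:] ^ (N - degree g) * z [:0,1:] ^ degree g"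
    using g by (simp add: power_add[symmetric])
  then show ?thesis unfolding zconj_def z_rv[OF g] using zT by simp
qed

lemma zconj_rv: "degree F \<le> N \<Longrightarrow> zconj z (rv N F) = z F / z [:0,1:] ^ N"
  using zconj_alt[OF degree_rv, of F N] rv_rv[of F N] by simp

lemma usn_zconj: "usn (zconj z)"
  unfolding usn_def
proof (intro conjI allI)
  fix f g :: "'a poly"
  show "0 \<le> zconj z f" unfolding zconj_def using usn_nonneg[OF z] zT by simp
  show "zconj z (f * g) = zconj z f * zconj z g"
  proof (cases "f = 0 \<or> g = 0")
    case True
    then show ?thesis by (auto simp: zconj_def usn_0[OF z])
  next
    case False
    then show ?thesis
      by (simp add: zconj_def reflect_poly_mult degree_mult_eq usn_mult[OF z] power_add)
  qed
  define N where "N = max (degree f) (degree g)"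
  have df: "degree f \<le> N" and dg: "degree g \<le> N" and dfg: "degree (f + g) \<le> N"
    unfolding N_def by (auto simp: degree_add_le)
  have "zconj z (f + g) = z (rv N f + rv N g) / z [:0,1:] ^ N"
    using zconj_alt[OF dfg] rv_add[OF df dg] by simp
  also have "\<dots> \<le> max (z (rv N f)) (z (rv N g)) / z [:0,1:] ^ N"
    using zT by (intro divide_right_mono usn_ultra[OF z]) simp
  also have "\<dots> = max (zconj z f) (zconj z g)"
    using zconj_alt[OF df] zconj_alt[OF dg] zT by (simp add: max_divide_distrib_right)
  finally show "zconj z (f + g) \<le> max (zconj z f) (zconj z g)" .
next
  fix c
  show "zconj z [:c:] = nabs c" by (simp add: zconj_def usn_const[OF z])
qed

lemma zconj_nz: "(\<And>f. f \<noteq> 0 \<Longrightarrow> z f \<noteq> 0) \<Longrightarrow> f \<noteq> 0 \<Longrightarrow> zconj z f \<noteq> 0"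
  unfolding zconj_def using zT by simp

lemma zconj_X: "zconj z [:0,1:] = 1 / z [:0,1:]"
proof -
  have "reflect_poly [:0,1::'a:] = 1"
    by (rule poly_eqI) (simp add: coeff_reflect_poly coeff_pCons split: nat.splits)
  then show ?thesis by (simp add: zconj_def usn_1[OF z])
qed

lemma zconj_lin: "zconj z [:-c,1:] = z [:1,-c:] / z [:0,1:]"
  using zconj_alt[of "[:-c,1:]" 1] rv_lin[of c] by simp

end

lemma norm_exists:
  fixes P Q :: "'a::nonarch_field poly"
  assumes "P \<noteq> 0 \<or> Q \<noteq> 0"
  shows "\<exists>c. c \<noteq> 0 \<and> normalized (smult c P) (smult c Q)"
proof -
  define N where "N = max (degree P) (degree Q)"
  define S where "S = (\<lambda>i. nabs (coeff P i)) ` {..N} \<union> (\<lambda>i. nabs (coeff Q i)) ` {..N}"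
  define M where "M = Max S"
  have fin: "finite S" and ne: "S \<noteq> {}" unfolding S_def by auto
  have MS: "M \<in> S" unfolding M_def using fin ne by (rule Max_in)
  have geP: "nabs (coeff P i) \<le> M" if "i \<le> N" for i
    unfolding M_def using fin that by (intro Max_ge) (auto simp: S_def)
  have geQ: "nabs (coeff Q i) \<le> M" if "i \<le> N" for i
    unfolding M_def using fin that by (intro Max_ge) (auto simp: S_def)
  have M0: "0 \<le> M" using geP[of 0] nabs_nonneg[of "coeff P 0"] by simp
  have bP: "nabs (coeff P i) \<le> M" for i
  proof (cases "i \<le> N")
    case False
    then have "coeff P i = 0" by (intro coeff_eq_0) (simp add: N_def)
    then show ?thesis using M0 by simp
  qed (rule geP)
  have bQ: "nabs (coeff Q i) \<le> M" for i
  proof (cases "i \<le> N")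
    case False
    then have "coeff Q i = 0" by (intro coeff_eq_0) (simp add: N_def)
    then show ?thesis using M0 by simp
  qed (rule geQ)
  have Mp: "0 < M"
  proof -
    have "\<exists>i. nabs (coeff P i) > 0 \<or> nabs (coeff Q i) > 0"
      using assms nabs_nonneg nabs_eq_0_iff
      by (metis leading_coeff_0_iff order_le_less)
    then show ?thesis using bP bQ by (meson less_le_trans)
  qed
  obtain x where x: "nabs x = M" "\<exists>i. x = coeff P i \<or> x = coeff Q i"
    using MS unfolding S_def by auto
  have x0: "x \<noteq> 0" using x Mp by auto
  define c where "c = inverse x"
  have nc: "nabs c = inverse M" unfolding c_def using x x0 by (simp add: nabs_inverse)
  have "normalized (smult c P) (smult c Q)"
    unfolding normalized_def
  proof (intro conjI allI)
    fix i
    show "nabs (coeff (smult c P) i) \<le> 1" using bP[of i] Mp nabs_nonneg[of "coeff P i"]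
      by (simp add: nabs_mult nc field_simps)
    show "nabs (coeff (smult c Q) i) \<le> 1" using bQ[of i] Mp nabs_nonneg[of "coeff Q i"]
      by (simp add: nabs_mult nc field_simps)
  next
    from x(2) obtain i where "x = coeff P i \<or> x = coeff Q i" by blast
    then have "nabs (coeff (smult c P) i) = 1 \<or> nabs (coeff (smult c Q) i) = 1"
      using x Mp by (auto simp: nabs_mult nc)
    then show "\<exists>i. nabs (coeff (smult c P) i) = 1 \<or> nabs (coeff (smult c Q) i) = 1" by blast
  qed
  moreover have "c \<noteq> 0" using x0 by (simp add: c_def)
  ultimately show ?thesis by blast
qed

lemma gcd_one:
  fixes A0 B0 :: "'b::field_gcd poly"
  assumes ne: "A0 \<noteq> 0 \<or> B0 \<noteq> 0" and dA: "degree A0 \<le> m" and dB: "degree B0 \<le> m" and m: "0 < m"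
    and eq: "max (degree (A0 div gcd A0 B0)) (degree (B0 div gcd A0 B0)) = m"
  shows "gcd A0 B0 = 1"
proof (rule ccontr)
  assume ng: "gcd A0 B0 \<noteq> 1"
  define g where "g = gcd A0 B0"
  have g0: "g \<noteq> 0" using ne by (simp add: g_def)
  have "degree g \<noteq> 0"
  proof
    assume "degree g = 0"
    then have "is_unit g" using g0 by (simp add: is_unit_iff_degree)
    moreover have "normalize g = g" by (simp add: g_def)
    ultimately show False using ng g_def by (metis normalize_1_iff)
  qed
  then have dg: "1 \<le> degree g" by simp
  have lt: "degree (X div g) < m" if "g dvd X" "degree X \<le> m" for X
  proof (cases "X = 0")
    case True
    then show ?thesis using m by simp
  next
    case False
    have e: "X = g * (X div g)" using that(1) by simp
    then have "X div g \<noteq> 0" using False by auto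
    then have "degree X = degree g + degree (X div g)" using g0 e by (metis degree_mult_eq)
    then show ?thesis using dg that(2) by simp
  qed
  have "degree (A0 div g) < m" by (rule lt) (auto simp: g_def dA)
  moreover have "degree (B0 div g) < m" by (rule lt) (auto simp: g_def dB)
  ultimately show False using eq unfolding g_def by simp
qed

lemma comp_num_lin: "comp_num P Q [:-c, 1:] = P - smult c (Q :: 'a::comm_ring_1 poly)"
  unfolding comp_num_def by (simp add: numeral_2_eq_2)

lemma berk_fix_lin:
  assumes "berk_map P Q (Some z) = Some z"
  shows "z Q \<noteq> 0" "z [:-c,1:] * z Q = z (P - smult c Q)"
proof -
  show zQ: "z Q \<noteq> 0" using assms unfolding berk_map_def by (auto split: if_splits)
  then have "z = (\<lambda>g. z (comp_num P Q g) / z Q ^ degree g)"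
    using assms unfolding berk_map_def by (auto split: if_splits)
  then have "z [:-c,1:] = z (comp_num P Q [:-c,1:]) / z Q ^ degree [:-c,1::'a:]" by metis
  then show "z [:-c,1:] * z Q = z (P - smult c Q)" using zQ by (simp add: comp_num_lin)
qed

lemma dvd2_root:
  fixes F :: "'b::idom poly"
  assumes "[:-t,1:]^2 dvd F"
  shows "poly F t = 0" "poly (pderiv F) t = 0"
proof -
  obtain K where K: "F = [:-t,1:]^2 * K" using assms by (elim dvdE)
  show "poly F t = 0" unfolding K by simp
  show "poly (pderiv F) t = 0" unfolding K by (simp only: power2_eq_square pderiv_mult poly_add poly_mult) simp
qed

lemma conj_fix:
  fixes z :: "'a::nonarch_field poly \<Rightarrow> real"
  assumes z: "usn z" and fx: "\<And>c. z [:-c,1:] * z Q1 = z (P1 - smult c Q1)"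
  shows "z [:1,-c:] * z P1 = z [:0,1:] * z (Q1 - smult c P1)"
proof -
  have P1: "z P1 = z [:0,1:] * z Q1" using fx[of 0] by simp
  show ?thesis
  proof (cases "c = 0")
    case True
    then show ?thesis using P1 by (simp add: usn_1[OF z] one_pCons[symmetric])
  next
    case False
    have e: "[:1,-c:] = smult (-c) [:-(inverse c), 1:]" using False by simp
    have "z [:1,-c:] * z P1 = nabs c * (z [:-(inverse c), 1:] * z Q1) * z [:0,1:]"
      unfolding e usn_smult[OF z] P1 by simp
    also have "\<dots> = nabs c * z (P1 - smult (inverse c) Q1) * z [:0,1:]" by (simp add: fx)
    also have "\<dots> = z (smult c (P1 - smult (inverse c) Q1)) * z [:0,1:]" by (simp add: usn_smult[OF z])
    also have "smult c (P1 - smult (inverse c) Q1) = smult c P1 - Q1" using False by (simp add: smult_diff_right)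
    also have "z (smult c P1 - Q1) = z (Q1 - smult c P1)" by (rule usn_diff_commute[OF z])
    finally show ?thesis by simp
  qed
qed

lemma finish_type1:
  fixes z :: "'a::nonarch_field poly \<Rightarrow> real"
  assumes z: "usn z" and closed: "alg_closed TYPE('a)"
    and nz: "(\<And>f. f \<noteq> 0 \<Longrightarrow> z f \<noteq> 0) \<Longrightarrow> False"
  shows "\<exists>c. z = (\<lambda>f. nabs (poly f c))"
proof -
  obtain h where "h \<noteq> 0" "z h = 0" using nz by blast
  then obtain c where "z [:-c,1:] = 0" using vanish_linear[OF z closed] by blast
  then show ?thesis using vanish_type1[OF z] by blast
qed

lemma case_some:
  fixes z :: "'a::nonarch_field poly \<Rightarrow> real" and P1 Q1 :: "'a poly"
  assumes zm: "mult_seminorm z" and complete: "nabs_complete TYPE('a)" and closed: "alg_closed TYPE('a)"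
    and iP: "intpoly P1" and iQ: "intpoly Q1"
    and a: "nabs a \<le> 1" and ta: "red a = t" and za: "z [:-a,1:] < 1"
    and B0t: "poly (map_poly red Q1) t \<noteq> 0"
    and F: "[:-t,1:]^2 dvd (map_poly red P1 - smult t (map_poly red Q1))"
    and fx: "\<And>c. z [:-c,1:] * z Q1 = z (P1 - smult c Q1)"
  shows "\<exists>c. z = (\<lambda>f. nabs (poly f c))"
proof (rule finish_type1[OF ms_usn[OF zm] closed])
  assume nz: "\<And>f. f \<noteq> 0 \<Longrightarrow> z f \<noteq> 0"
  define A0 where "A0 = map_poly red P1"
  define B0 where "B0 = map_poly red Q1"
  have F0: "poly A0 t - t * poly B0 t = 0" using dvd2_root(1)[OF F] by (simp add: A0_def B0_def)
  have F1: "poly (pderiv A0) t - t * poly (pderiv B0) t = 0"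
    using dvd2_root(2)[OF F] by (simp add: A0_def B0_def pderiv_diff pderiv_smult)
  have Qa1: "nabs (poly Q1 a) \<le> 1" by (rule intpoly_poly[OF iQ a])
  have "red (poly Q1 a) = poly B0 t" unfolding B0_def using red_poly[OF iQ a] ta by simp
  then have "red (poly Q1 a) \<noteq> 0" using B0t by (simp add: B0_def)
  then have Qa: "nabs (poly Q1 a) = 1" using red_eq_0_iff[OF Qa1] Qa1 by simp
  define W where "W = Q1 * pderiv P1 - P1 * pderiv Q1"
  have iW: "intpoly W" unfolding W_def by (intro intpoly_diff intpoly_mult intpoly_pderiv iP iQ)
  have b: "nabs (poly Q1 a) \<le> 1" "nabs (poly P1 a) \<le> 1" "nabs (poly (pderiv P1) a) \<le> 1"
    "nabs (poly (pderiv Q1) a) \<le> 1"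
    using a iP iQ by (auto intro!: intpoly_poly intpoly_pderiv)
  have rP: "red (poly P1 a) = poly A0 t" unfolding A0_def using red_poly[OF iP a] ta by simp
  have rQ: "red (poly Q1 a) = poly B0 t" unfolding B0_def using red_poly[OF iQ a] ta by simp
  have rP': "red (poly (pderiv P1) a) = poly (pderiv A0) t"
    unfolding A0_def using red_poly[OF intpoly_pderiv[OF iP] a] ta map_poly_red_pderiv[OF iP] by simp
  have rQ': "red (poly (pderiv Q1) a) = poly (pderiv B0) t"
    unfolding B0_def using red_poly[OF intpoly_pderiv[OF iQ] a] ta map_poly_red_pderiv[OF iQ] by simp
  have "red (poly W a) = red (poly Q1 a * poly (pderiv P1) a - poly P1 a * poly (pderiv Q1) a)"
    by (simp add: W_def)
  also have "\<dots> = poly B0 t * poly (pderiv A0) t - poly A0 t * poly (pderiv B0) t"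
    using b by (simp add: red_diff red_mult nabs_mult_le1 rP rQ rP' rQ')
  also have "\<dots> = 0"
  proof -
    have "poly A0 t = t * poly B0 t" "poly (pderiv A0) t = t * poly (pderiv B0) t" using F0 F1 by simp_all
    then show ?thesis by simp
  qed
  finally have "nabs (poly W a) < 1" using red_eq_0_iff intpoly_poly[OF iW a] by blast
  then show False
    using core[OF ms_usn[OF zm] complete nz iP iQ a za Qa _ fx] by (simp add: W_def)
qed

lemma case_none:
  fixes z :: "'a::nonarch_field poly \<Rightarrow> real" and P1 Q1 :: "'a poly"
  assumes zm: "mult_seminorm z" and complete: "nabs_complete TYPE('a)" and closed: "alg_closed TYPE('a)"
    and iP: "intpoly P1" and iQ: "intpoly Q1"
    and zT: "1 < z [:0,1:]"
    and D: "2 \<le> D" and dP: "degree P1 \<le> D" and dQ: "degree Q1 \<le> D"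
    and PD: "nabs (coeff P1 D) = 1" and QD: "nabs (coeff Q1 D) < 1" and QD1: "nabs (coeff Q1 (D - 1)) < 1"
    and fx: "\<And>c. z [:-c,1:] * z Q1 = z (P1 - smult c Q1)"
  shows "\<exists>c. z = (\<lambda>f. nabs (poly f c))"
proof (rule finish_type1[OF ms_usn[OF zm] closed])
  assume nz: "\<And>f. f \<noteq> 0 \<Longrightarrow> z f \<noteq> 0"
  have z: "usn z" by (rule ms_usn[OF zm])
  have zT0: "0 < z [:0,1:]" using zT by simp
  define zs where "zs = zconj z"
  have zs: "usn zs" unfolding zs_def by (rule usn_zconj[OF z zT0])
  have nzs: "f \<noteq> 0 \<Longrightarrow> zs f \<noteq> 0" for f unfolding zs_def by (rule zconj_nz[OF z zT0 nz])
  define P' where "P' = rv D Q1"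
  define Q' where "Q' = rv D P1"
  have iP': "intpoly P'" unfolding P'_def by (rule intpoly_rv[OF iQ dQ])
  have iQ': "intpoly Q'" unfolding Q'_def by (rule intpoly_rv[OF iP dP])
  have a0: "nabs (0::'a) \<le> 1" by simp
  have za: "zs [:-0,1:] < 1" unfolding zs_def using zconj_X[OF z zT0] zT by simp
  have Qa: "nabs (poly Q' 0) = 1" unfolding Q'_def using PD by (simp add: poly_0_coeff_0 coeff_rv dP)
  have c1: "coeff P' 0 = coeff Q1 D" "coeff P' (Suc 0) = coeff Q1 (D - Suc 0)"
    "coeff Q' 0 = coeff P1 D" "coeff Q' (Suc 0) = coeff P1 (D - Suc 0)"
    unfolding P'_def Q'_def using D by (simp_all add: coeff_rv dP dQ)
  have "poly (Q' * pderiv P' - P' * pderiv Q') 0 = coeff P1 D * coeff Q1 (D - 1) - coeff Q1 D * coeff P1 (D - 1)"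
    unfolding poly_diff poly_mult unfolding poly_0_coeff_0 coeff_pderiv c1 using c1 by simp
  moreover have "nabs (coeff P1 D * coeff Q1 (D - 1) - coeff Q1 D * coeff P1 (D - 1)) < 1"
  proof -
    have "nabs (coeff P1 (D - 1)) \<le> 1" using iP by (simp add: intpoly_def)
    then have 1: "nabs (coeff Q1 D * coeff P1 (D - 1)) < 1" using QD nabs_nonneg[of "coeff P1 (D - 1)"] nabs_nonneg[of "coeff Q1 D"]
      by (simp add: nabs_mult) (meson le_less_trans mult_left_le)
    have 2: "nabs (coeff P1 D * coeff Q1 (D - 1)) < 1" using PD QD1 by (simp add: nabs_mult)
    show ?thesis using nabs_diff[of "coeff P1 D * coeff Q1 (D - 1)" "coeff Q1 D * coeff P1 (D - 1)"] 1 2 by simp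
  qed
  ultimately have Wa: "nabs (poly (Q' * pderiv P' - P' * pderiv Q') 0) < 1" by simp
  have fx': "zs [:-c,1:] * zs Q' = zs (P' - smult c Q')" for c
  proof -
    have dd: "degree (Q1 - smult c P1) \<le> D" using dP dQ
      by (meson degree_diff_le degree_smult_le order_trans)
    have e: "P' - smult c Q' = rv D (Q1 - smult c P1)" unfolding P'_def Q'_def
      using dP dQ by (simp add: rv_diff rv_smult le_trans[OF degree_smult_le])
    have "zs [:-c,1:] * zs Q' = (z [:1,-c:] / z [:0,1:]) * (z P1 / z [:0,1:] ^ D)"
      unfolding zs_def Q'_def using zconj_lin[OF z zT0] zconj_rv[OF z zT0 dP] by simp
    also have "\<dots> = (z [:1,-c:] * z P1) / (z [:0,1:] * z [:0,1:] ^ D)" by simp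
    also have "\<dots> = (z [:0,1:] * z (Q1 - smult c P1)) / (z [:0,1:] * z [:0,1:] ^ D)"
      using conj_fix[OF z fx] by simp
    also have "\<dots> = z (Q1 - smult c P1) / z [:0,1:] ^ D" using zT0 by simp
    also have "\<dots> = zs (P' - smult c Q')" unfolding e zs_def using zconj_rv[OF z zT0 dd] by simp
    finally show ?thesis .
  qed
  show False by (rule core[OF zs complete nzs iP' iQ' a0 za Qa Wa fx'])
qed

theorem lemma3p8:
  fixes P Q :: "'a::nonarch_field poly" and v :: "'a res option" and \<xi> :: "'a berk"
  assumes nontriv: "nabs_nontrivial TYPE('a)"
    and complete: "nabs_complete TYPE('a)"
    and closed: "alg_closed TYPE('a)"
    and phi: "coprime P Q" "rat_deg P Q \<ge> 2"
    and good: "good_reduction P Q"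
    and fixed_dir: "rat_eval (red_num P Q) (red_den P Q) v = v"
    and crit_dir: "rat_mult (red_num P Q) (red_den P Q) v \<ge> 2"
    and xi: "\<xi> \<in> berk_P1" "\<xi> \<in> berk_dir_disk v"
    and fixed: "berk_map P Q \<xi> = \<xi>"
  shows "is_type1 \<xi>"
proof -
  have PQ: "P \<noteq> 0 \<or> Q \<noteq> 0" using phi(2) by (auto simp: rat_deg_def)
  define lam where "lam = norm_scalar P Q"
  have lam: "lam \<noteq> 0 \<and> normalized (smult lam P) (smult lam Q)"
    unfolding lam_def norm_scalar_def by (rule someI_ex[OF norm_exists[OF PQ]])
  define P1 where "P1 = smult lam P"
  define Q1 where "Q1 = smult lam Q"
  have nP1: "normalized P1 Q1" using lam by (simp add: P1_def Q1_def)
  have iP: "intpoly P1" and iQ: "intpoly Q1" using nP1 by (auto simp: normalized_def intpoly_def)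
  define A0 where "A0 = map_poly red P1"
  define B0 where "B0 = map_poly red Q1"
  have rn0: "red_num0 P Q = A0" "red_den0 P Q = B0"
    unfolding red_num0_def red_den0_def A0_def B0_def P1_def Q1_def lam_def by simp_all
  have cA: "coeff A0 i = red (coeff P1 i)" for i by (simp add: A0_def coeff_map_poly)
  have cB: "coeff B0 i = red (coeff Q1 i)" for i by (simp add: B0_def coeff_map_poly)
  have ne: "A0 \<noteq> 0 \<or> B0 \<noteq> 0"
  proof -
    obtain i where "nabs (coeff P1 i) = 1 \<or> nabs (coeff Q1 i) = 1" using nP1 by (auto simp: normalized_def)
    then have "coeff A0 i \<noteq> 0 \<or> coeff B0 i \<noteq> 0"
    proof
      assume "nabs (coeff P1 i) = 1"
      then have "red (coeff P1 i) \<noteq> 0" using red_eq_0_iff[of "coeff P1 i"] by simp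
      then show ?thesis using cA by simp
    next
      assume "nabs (coeff Q1 i) = 1"
      then have "red (coeff Q1 i) \<noteq> 0" using red_eq_0_iff[of "coeff Q1 i"] by simp
      then show ?thesis using cB by simp
    qed
    then show ?thesis by auto
  qed
  have dP1: "degree P1 = degree P" and dQ1: "degree Q1 = degree Q" using lam by (simp_all add: P1_def Q1_def)
  have dA: "degree A0 \<le> degree P" unfolding dP1[symmetric] by (rule degree_le) (simp add: cA coeff_eq_0)
  have dB: "degree B0 \<le> degree Q" unfolding dQ1[symmetric] by (rule degree_le) (simp add: cB coeff_eq_0)
  define m where "m = rat_deg P Q"
  have m2: "2 \<le> m" using phi(2) by (simp add: m_def)
  have dPm: "degree P \<le> m" and dQm: "degree Q \<le> m" by (simp_all add: m_def rat_deg_def)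
  have good': "max (degree (A0 div gcd A0 B0)) (degree (B0 div gcd A0 B0)) = m"
    using good unfolding good_reduction_def red_num_def red_den_def rat_deg_def rn0 m_def .
  have g1: "gcd A0 B0 = 1"
    by (rule gcd_one[OF ne _ _ _ good']) (use dA dB dPm dQm m2 in auto)
  have rn: "red_num P Q = A0" "red_den P Q = B0" unfolding red_num_def red_den_def rn0 g1 by simp_all
  have zfix: "z [:-c,1:] * z Q1 = z (P1 - smult c Q1)"
    if zm: "mult_seminorm z" and fz: "berk_map P Q (Some z) = Some z" for z c
  proof -
    have z: "usn z" by (rule ms_usn[OF zm])
    have "z [:-c,1:] * z Q = z (P - smult c Q)" by (rule berk_fix_lin(2)[OF fz])
    then have "nabs lam * (z [:-c,1:] * z Q) = nabs lam * z (P - smult c Q)" by simp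
    moreover have "P1 - smult c Q1 = smult lam (P - smult c Q)"
      by (simp add: P1_def Q1_def smult_diff_right mult.commute)
    ultimately show ?thesis by (simp add: usn_smult[OF z] Q1_def)
  qed
  show ?thesis
  proof (cases v)
    case None
    from xi(2) None consider "\<xi> = None" | z where "\<xi> = Some z" "mult_seminorm z" "1 < z [:0,1:]"
      unfolding berk_dir_disk_def by auto
    then show ?thesis
    proof cases
      case 1
      then show ?thesis by (simp add: is_type1_def)
    next
      case 2
      have re: "rat_eval A0 B0 None = None" using fixed_dir None rn by simp
      then have lt: "degree B0 < degree A0" unfolding rat_eval_def by (auto split: if_splits)
      have "rat_mult A0 B0 None \<ge> 2" using crit_dir None rn by simp
      then have d2: "degree B0 + 2 \<le> degree A0" using re unfolding rat_mult_def by simp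
      have "max (degree A0) (degree B0) = m" using good' g1 by simp
      then have dAm: "degree A0 = m" using lt by simp
      have dP1m: "degree P1 \<le> m" and dQ1m: "degree Q1 \<le> m" using dP1 dQ1 dPm dQm by simp_all
      have "A0 \<noteq> 0" using dAm m2 by auto
      then have "coeff A0 m \<noteq> 0" using dAm by (metis leading_coeff_0_iff)
      then have "red (coeff P1 m) \<noteq> 0" using cA by simp
      moreover have "nabs (coeff P1 m) \<le> 1" using iP by (simp add: intpoly_def)
      ultimately have PD: "nabs (coeff P1 m) = 1" using red_eq_0_iff by fastforce
      have "coeff B0 m = 0" "coeff B0 (m - 1) = 0" using d2 dAm by (auto intro!: coeff_eq_0)
      then have "red (coeff Q1 m) = 0" "red (coeff Q1 (m - 1)) = 0" using cB by simp_all
      moreover have "nabs (coeff Q1 m) \<le> 1" "nabs (coeff Q1 (m - 1)) \<le> 1" using iQ by (simp_all add: intpoly_def)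
      ultimately have QD: "nabs (coeff Q1 m) < 1" "nabs (coeff Q1 (m - 1)) < 1" using red_eq_0_iff by blast+
      have fz: "berk_map P Q (Some z) = Some z" using fixed 2 by simp
      obtain c where "z = (\<lambda>f. nabs (poly f c))"
        using case_none[OF 2(2) complete closed iP iQ 2(3) m2 dP1m dQ1m PD QD zfix[OF 2(2) fz]] by blast
      then show ?thesis using 2 by (auto simp: is_type1_def type1pt_def)
    qed
  next
    case (Some t)
    from xi(2) Some obtain z a where za: "\<xi> = Some z" "mult_seminorm z" "nabs a \<le> 1" "red a = t" "z [:-a,1:] < 1"
      unfolding berk_dir_disk_def by auto
    have re: "rat_eval A0 B0 (Some t) = Some t" using fixed_dir Some rn by simp
    then have B0t: "poly B0 t \<noteq> 0" and At: "poly A0 t / poly B0 t = t"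
      unfolding rat_eval_def by (auto split: if_splits)
    have "rat_mult A0 B0 (Some t) \<ge> 2" using crit_dir Some rn by simp
    then have "2 \<le> order t (A0 - smult t B0)" using re unfolding rat_mult_def by simp
    then have F: "[:-t,1:]^2 dvd (A0 - smult t B0)" using order_divides by blast
    have fz: "berk_map P Q (Some z) = Some z" using fixed za by simp
    obtain c where "z = (\<lambda>f. nabs (poly f c))"
      using case_some[OF za(2) complete closed iP iQ za(3) za(4) za(5) _ _ zfix[OF za(2) fz]]
        B0t F by (auto simp: A0_def B0_def)
    then show ?thesis using za by (auto simp: is_type1_def type1pt_def)
  qed
qed

end
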